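(* The following formulae provide biholomorphisms between the corresponding domains: \begin{itemize} \item $\mathbb L_2\ni w\mapsto (2iw_2,-w_1-w_2^2)\in \mathbb G_2$, \item $\mathbb L_3\ni w\mapsto (w_2+iw_3,-w_2+iw_3,-w_3^2-w_2^2-w_1)\in\mathbb E$, \item $\mathbb L_4\ni w\mapsto (w_3+iw_4,-w_3+iw_4,-w_2^2-w_3^2-w_4^2-w_1,2w_2)\in\mathbb F$. \end{itemize}
   Context: $L_n=\{z\in\mathbb B_n: \sqrt{(\sum_{j=1}^n|z_j|^2)^2-|\sum_{j=1}^nz_j^2|^2}<1-\sum_{j=1}^n|z_j|^2\}$ is the Lie ball and $\mathbb L_n:=\Lambda_n(L_n)$ with $\Lambda_n(z)=(z_1^2,z_2,\ldots,z_n)$. The symmetrized bidisc is $\mathbb G_2=\{(\lambda_1+\lambda_2,\lambda_1\lambda_2):\lambda_1,\lambda_2\in\mathbb D\}$. The tetrablock is $\mathbb E=\{(a_{11},a_{22},a_{11}a_{22}-a^2): \begin{pmatrix} a_{11} & a\\ a & a_{22}\end{pmatrix}\in\mathcal R_{III}(2)\}$, where $\mathcal R_{III}(2)$ is the set of symmetric $2\times 2$ complex matrices of operator norm $<1$. The domain $\mathbb F=\{(a_{11},a_{22},a_{11}a_{22}-a_{12}a_{21},a_{12}+a_{21}): \begin{pmatrix} a_{11} & a_{12}\\ a_{21} & a_{22}\end{pmatrix}\in\mathcal R_{I}(2\times 2)\}$, where $\mathcal R_{I}(2\times 2)$ is the set of $2\times 2$ complex matrices of operator norm $<1$. *)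

theory Defs
  imports "HOL-Analysis.Analysis"
begin

definition holo_vec_on :: "(complex^'n \<Rightarrow> complex^'m) \<Rightarrow> (complex^'n) set \<Rightarrow> bool" where
  "holo_vec_on f S \<longleftrightarrow>
     (\<forall>x\<in>S. \<exists>D. (f has_derivative D) (at x) \<and> (\<forall>(c::complex) v. D (c *s v) = c *s D v))"

definition biholomorphism :: "(complex^'n \<Rightarrow> complex^'m) \<Rightarrow> (complex^'n) set \<Rightarrow> (complex^'m) set \<Rightarrow> bool" where
  "biholomorphism f A B \<longleftrightarrow>
     open A \<and> open B \<and> bij_betw f A B \<and> holo_vec_on f A \<and> holo_vec_on (inv_into A f) B"

definition lie_ball :: "(complex^'n) set" where
  "lie_ball = {z. (\<Sum>j\<in>UNIV. (cmod (z$j))\<^sup>2) < 1 \<and>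
      sqrt (((\<Sum>j\<in>UNIV. (cmod (z$j))\<^sup>2))\<^sup>2 - (cmod (\<Sum>j\<in>UNIV. (z$j)\<^sup>2))\<^sup>2)
        < 1 - (\<Sum>j\<in>UNIV. (cmod (z$j))\<^sup>2)}"

definition Lambda_map :: "complex^('n::{finite,one}) \<Rightarrow> complex^('n::{finite,one})" where
  "Lambda_map z = (\<chi> j. if j = 1 then (z$1)\<^sup>2 else z$j)"

definition LL :: "(complex^('n::{finite,one})) set" where
  "LL = Lambda_map ` lie_ball"

definition symm_bidisc :: "(complex^2) set" where
  "symm_bidisc = {vector [l1 + l2, l1 * l2] | l1 l2. cmod l1 < 1 \<and> cmod l2 < 1}"

definition mat_opnorm :: "complex^'n^'m \<Rightarrow> real" where
  "mat_opnorm A = onorm (\<lambda>x. A *v x)"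

definition tetrablock :: "(complex^3) set" where
  "tetrablock = {vector [A$1$1, A$2$2, A$1$1 * A$2$2 - (A$1$2)\<^sup>2] | A :: complex^2^2.
                  A$1$2 = A$2$1 \<and> mat_opnorm A < 1}"

definition domF :: "(complex^4) set" where
  "domF = {vector [A$1$1, A$2$2, A$1$1 * A$2$2 - A$1$2 * A$2$1, A$1$2 + A$2$1] | A :: complex^2^2.
                  mat_opnorm A < 1}"

end

theory Submission
  imports Defs
begin

lemma vector_4 [simp]:
 "(vector [x,y,z,u] ::('a::zero)^4)$1 = x"
 "(vector [x,y,z,u] ::('a::zero)^4)$2 = y"
 "(vector [x,y,z,u] ::('a::zero)^4)$3 = z"
 "(vector [x,y,z,u] ::('a::zero)^4)$4 = u"
  unfolding vector_def by simp_all

lemma UNIV2m: "(UNIV::2 set) - {1} = {2}" using UNIV_2 by auto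
lemma UNIV3m: "(UNIV::3 set) - {1} = {2,3}" using UNIV_3 by auto
lemma UNIV4m: "(UNIV::4 set) - {1} = {2,3,4}" using UNIV_4 by auto

lemma vec2_eq: "(y::'a::zero^2) = vector [u,v] \<longleftrightarrow> y$1 = u \<and> y$2 = v"
  by (auto simp: vec_eq_iff forall_2)
lemma vec3_eq: "(y::'a::zero^3) = vector [u,v,s] \<longleftrightarrow> y$1 = u \<and> y$2 = v \<and> y$3 = s"
  by (auto simp: vec_eq_iff forall_3)
lemma vec4_eq: "(y::'a::zero^4) = vector [u,v,s,t] \<longleftrightarrow> y$1 = u \<and> y$2 = v \<and> y$3 = s \<and> y$4 = t"
  by (auto simp: vec_eq_iff forall_4)

section \<open>Polynomial maps are holomorphic\<close>

inductive cpoly :: "(complex^'n \<Rightarrow> complex) \<Rightarrow> bool" where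
  cp_const: "cpoly (\<lambda>w. c)"
| cp_nth: "cpoly (\<lambda>w. w $ j)"
| cp_add: "cpoly p \<Longrightarrow> cpoly q \<Longrightarrow> cpoly (\<lambda>w. p w + q w)"
| cp_diff: "cpoly p \<Longrightarrow> cpoly q \<Longrightarrow> cpoly (\<lambda>w. p w - q w)"
| cp_mult: "cpoly p \<Longrightarrow> cpoly q \<Longrightarrow> cpoly (\<lambda>w. p w * q w)"
| cp_uminus: "cpoly p \<Longrightarrow> cpoly (\<lambda>w. - p w)"
| cp_power: "cpoly p \<Longrightarrow> cpoly (\<lambda>w. p w ^ k)"
| cp_divc: "cpoly p \<Longrightarrow> cpoly (\<lambda>w. p w / c)"

lemma cpoly_deriv:
  assumes "cpoly p"
  shows "\<exists>D. (p has_derivative D) (at x) \<and> (\<forall>c v. D (c *s v) = c * D v)"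
  using assms
proof induction
  case (cp_const c)
  show ?case by (rule exI[of _ "\<lambda>v. 0"]) auto
next
  case (cp_nth j)
  show ?case
    by (rule exI[of _ "\<lambda>v. v $ j"]) (auto intro: bounded_linear_imp_has_derivative)
next
  case (cp_add p q)
  then obtain D1 D2 where "(p has_derivative D1) (at x)" "\<forall>c v. D1 (c *s v) = c * D1 v"
     "(q has_derivative D2) (at x)" "\<forall>c v. D2 (c *s v) = c * D2 v" by blast
  then show ?case
    by (intro exI[of _ "\<lambda>v. D1 v + D2 v"]) (auto intro: has_derivative_add simp: algebra_simps)
next
  case (cp_diff p q)
  then obtain D1 D2 where "(p has_derivative D1) (at x)" "\<forall>c v. D1 (c *s v) = c * D1 v"
     "(q has_derivative D2) (at x)" "\<forall>c v. D2 (c *s v) = c * D2 v" by blast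
  then show ?case
    by (intro exI[of _ "\<lambda>v. D1 v - D2 v"]) (auto intro: has_derivative_diff simp: algebra_simps)
next
  case (cp_mult p q)
  then obtain D1 D2 where "(p has_derivative D1) (at x)" "\<forall>c v. D1 (c *s v) = c * D1 v"
     "(q has_derivative D2) (at x)" "\<forall>c v. D2 (c *s v) = c * D2 v" by blast
  then show ?case
    by (intro exI[of _ "\<lambda>v. p x * D2 v + D1 v * q x"] conjI has_derivative_mult) (auto simp: algebra_simps)
next
  case (cp_uminus p)
  then obtain D1 where "(p has_derivative D1) (at x)" "\<forall>c v. D1 (c *s v) = c * D1 v" by blast
  then show ?case
    by (intro exI[of _ "\<lambda>v. - D1 v"]) (auto intro: has_derivative_minus simp: algebra_simps)
next
  case (cp_power p k)
  then obtain D1 where "(p has_derivative D1) (at x)" "\<forall>c v. D1 (c *s v) = c * D1 v" by blast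
  then show ?case
    by (intro exI[of _ "\<lambda>v. of_nat k * D1 v * p x ^ (k - 1)"] conjI has_derivative_power) (auto simp: algebra_simps)
next
  case (cp_divc p c)
  then obtain D1 where "(p has_derivative D1) (at x)" "\<forall>c v. D1 (c *s v) = c * D1 v" by blast
  then show ?case
    by (intro exI[of _ "\<lambda>v. D1 v / c"])
      (auto intro: bounded_linear.has_derivative[OF bounded_linear_divide])
qed

lemma vec_has_derivative:
  fixes f :: "'a::real_normed_vector \<Rightarrow> complex^'n"
  assumes "\<And>i. ((\<lambda>x. f x $ i) has_derivative D i) (at a)"
  shows "(f has_derivative (\<lambda>v. \<chi> i. D i v)) (at a)"
proof -
  have "((\<lambda>x. f x \<bullet> b) has_derivative (\<lambda>v. (\<chi> i. D i v) \<bullet> b)) (at a)" if "b \<in> Basis" for b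
  proof -
    from that obtain i u where b: "b = axis i u" and u: "u \<in> Basis" by (auto simp: Basis_vec_def)
    have "((\<lambda>x. (f x $ i) \<bullet> u) has_derivative (\<lambda>v. D i v \<bullet> u)) (at a)"
      using bounded_linear.has_derivative[OF bounded_linear_inner_left assms] .
    then show ?thesis by (simp add: b inner_axis)
  qed
  then show ?thesis using has_derivative_componentwise_within[of f _ a UNIV] by auto
qed

lemma holo_cpoly:
  fixes f :: "complex^'n \<Rightarrow> complex^'m"
  assumes "\<And>i. cpoly (\<lambda>w. f w $ i)"
  shows "holo_vec_on f S"
  unfolding holo_vec_on_def
proof
  fix x assume "x \<in> S"
  have "\<forall>i. \<exists>D. ((\<lambda>w. f w $ i) has_derivative D) (at x) \<and> (\<forall>c v. D (c *s v) = c * D v)"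
    using cpoly_deriv[OF assms] by blast
  then obtain D where D: "\<And>i. ((\<lambda>w. f w $ i) has_derivative D i) (at x)"
      "\<And>i c v. D i (c *s v) = c * D i v"
    by metis
  show "\<exists>D. (f has_derivative D) (at x) \<and> (\<forall>(c::complex) v. D (c *s v) = c *s D v)"
    by (intro exI[of _ "\<lambda>v. \<chi> i. D i v"] conjI vec_has_derivative D allI) (simp add: vec_eq_iff D)
qed

lemma biholo_inverse:
  fixes f g :: "complex^'n \<Rightarrow> complex^'n"
  assumes gf: "\<And>x. g (f x) = x" and fg: "\<And>y. f (g y) = y"
    and pf: "\<And>i. cpoly (\<lambda>w. f w $ i)" and pg: "\<And>i. cpoly (\<lambda>w. g w $ i)"
    and A: "open A" and B: "\<And>y. y \<in> B \<longleftrightarrow> g y \<in> A"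
  shows "biholomorphism f A B"
proof -
  have Beq: "B = g -` A" using B by auto
  have hg: "holo_vec_on g UNIV" by (rule holo_cpoly[OF pg])
  have cg: "continuous (at x) g" for x
  proof -
    from hg obtain D where "(g has_derivative D) (at x)" unfolding holo_vec_on_def by blast
    then show "continuous (at x) g" by (rule has_derivative_continuous)
  qed
  have oB: "open B" unfolding Beq using continuous_open_vimage[OF A cg] .
  have inj: "inj_on f A" by (metis gf inj_on_inverseI)
  have img: "f ` A = B"
  proof
    show "f ` A \<subseteq> B" using B gf by auto
    show "B \<subseteq> f ` A"
    proof
      fix y assume "y \<in> B" then have "g y \<in> A" using B by auto
      then show "y \<in> f ` A" using fg by (metis image_eqI)
    qed
  qed
  have inv: "inv_into A f y = g y" if "y \<in> B" for y
    using inj B that fg by (metis inv_into_f_eq)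
  have hinv: "holo_vec_on (inv_into A f) B"
    unfolding holo_vec_on_def
  proof
    fix y assume y: "y \<in> B"
    from hg obtain D where D: "(g has_derivative D) (at y)" "\<forall>(c::complex) v. D (c *s v) = c *s D v"
      unfolding holo_vec_on_def by blast
    have "(inv_into A f has_derivative D) (at y)"
      by (rule has_derivative_transform_within_open[OF D(1) oB y]) (simp add: inv)
    then show "\<exists>D. (inv_into A f has_derivative D) (at y) \<and> (\<forall>(c::complex) v. D (c *s v) = c *s D v)"
      using D(2) by blast
  qed
  show ?thesis unfolding biholomorphism_def using A oB inj img hinv holo_cpoly[OF pf]
    by (auto simp: bij_betw_def)
qed


definition lc :: "real \<Rightarrow> complex \<Rightarrow> bool" where
  "lc S Q \<longleftrightarrow> S < 1 \<and> 2 * S < 1 + (cmod Q)\<^sup>2"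
definition SS :: "complex^('n::{finite,one}) \<Rightarrow> real" where
  "SS w = cmod (w$1) + (\<Sum>j\<in>UNIV-{1}. (cmod (w$j))\<^sup>2)"
definition QQ :: "complex^('n::{finite,one}) \<Rightarrow> complex" where
  "QQ w = w$1 + (\<Sum>j\<in>UNIV-{1}. (w$j)\<^sup>2)"

lemma sqrt_less_iff':
  assumes "y > 0" shows "sqrt x < y \<longleftrightarrow> x < y\<^sup>2"
proof -
  have "sqrt x < y \<longleftrightarrow> sqrt x < sqrt (y\<^sup>2)" using assms by simp
  also have "\<dots> \<longleftrightarrow> x < y\<^sup>2" by (rule real_sqrt_less_iff)
  finally show ?thesis .
qed

lemma lie_ball_iff:
  "z \<in> lie_ball \<longleftrightarrow> lc (\<Sum>j\<in>UNIV. (cmod (z$j))\<^sup>2) (\<Sum>j\<in>UNIV. (z$j)\<^sup>2)"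
proof -
  define s where "s = (\<Sum>j\<in>UNIV. (cmod (z$j))\<^sup>2)"
  define q where "q = (\<Sum>j\<in>UNIV. (z$j)\<^sup>2)"
  have "z \<in> lie_ball \<longleftrightarrow> s < 1 \<and> sqrt (s\<^sup>2 - (cmod q)\<^sup>2) < 1 - s"
    by (simp add: lie_ball_def s_def q_def)
  also have "\<dots> \<longleftrightarrow> s < 1 \<and> 2 * s < 1 + (cmod q)\<^sup>2"
  proof -
    have "s < 1 \<Longrightarrow> sqrt (s\<^sup>2 - (cmod q)\<^sup>2) < 1 - s \<longleftrightarrow> s\<^sup>2 - (cmod q)\<^sup>2 < (1 - s)\<^sup>2"
      by (rule sqrt_less_iff') simp
    moreover have "s\<^sup>2 - (cmod q)\<^sup>2 < (1 - s)\<^sup>2 \<longleftrightarrow> 2 * s < 1 + (cmod q)\<^sup>2"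
      by (auto simp: power2_diff)
    ultimately show ?thesis by blast
  qed
  finally show ?thesis by (simp add: lc_def s_def q_def)
qed

lemma LL_iff: "(w::complex^('n::{finite,one})) \<in> LL \<longleftrightarrow> lc (SS w) (QQ w)"
proof
  assume "w \<in> LL"
  then obtain z where z: "z \<in> lie_ball" "w = Lambda_map z" by (auto simp: LL_def)
  have w1: "w$1 = (z$1)\<^sup>2" and wj: "\<And>j. j \<noteq> 1 \<Longrightarrow> w$j = z$j"
    by (auto simp: z Lambda_map_def)
  have e1: "(\<Sum>j\<in>UNIV-{1}. (cmod (w$j))\<^sup>2) = (\<Sum>j\<in>UNIV-{1}. (cmod (z$j))\<^sup>2)"
    by (rule sum.cong) (auto simp: wj)
  have e2: "(\<Sum>j\<in>UNIV-{1}. (w$j)\<^sup>2) = (\<Sum>j\<in>UNIV-{1}. (z$j)\<^sup>2)"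
    by (rule sum.cong) (auto simp: wj)
  have "(\<Sum>j\<in>UNIV. (cmod (z$j))\<^sup>2) = SS w"
    by (simp add: sum.remove[of UNIV 1] SS_def e1 w1 norm_power)
  moreover have "(\<Sum>j\<in>UNIV. (z$j)\<^sup>2) = QQ w"
    by (simp add: sum.remove[of UNIV 1] QQ_def e2 w1)
  ultimately show "lc (SS w) (QQ w)" using z(1) lie_ball_iff by metis
next
  assume h: "lc (SS w) (QQ w)"
  define z where "z = ((\<chi> j. if j = 1 then csqrt (w$1) else w$j) :: complex^('n::{finite,one}))"
  have "Lambda_map z = w" by (simp add: vec_eq_iff Lambda_map_def z_def)
  have e1: "(\<Sum>j\<in>UNIV-{1}. (cmod (w$j))\<^sup>2) = (\<Sum>j\<in>UNIV-{1}. (cmod (z$j))\<^sup>2)"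
    by (rule sum.cong) (auto simp: z_def)
  have e2: "(\<Sum>j\<in>UNIV-{1}. (w$j)\<^sup>2) = (\<Sum>j\<in>UNIV-{1}. (z$j)\<^sup>2)"
    by (rule sum.cong) (auto simp: z_def)
  have "(\<Sum>j\<in>UNIV. (cmod (z$j))\<^sup>2) = SS w"
    by (simp add: sum.remove[of UNIV 1] SS_def e1) (simp add: z_def)
  moreover have "(\<Sum>j\<in>UNIV. (z$j)\<^sup>2) = QQ w"
    by (simp add: sum.remove[of UNIV 1] QQ_def e2) (simp add: z_def)
  ultimately have "z \<in> lie_ball" using h lie_ball_iff by metis
  then show "w \<in> LL" unfolding LL_def using \<open>Lambda_map z = w\<close> by blast
qed

lemma open_LL: "open (LL :: (complex^('n::{finite,one})) set)"
proof -
  have 1: "LL = {w::complex^('n::{finite,one}). SS w < 1} \<inter> {w. 2 * SS w < 1 + (cmod (QQ w))\<^sup>2}"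
    using LL_iff by (auto simp: lc_def)
  have 2: "open {w::complex^('n::{finite,one}). SS w < 1}"
    unfolding SS_def by (intro open_Collect_less continuous_intros)
  have 3: "open {w::complex^('n::{finite,one}). 2 * SS w < 1 + (cmod (QQ w))\<^sup>2}"
    unfolding SS_def QQ_def by (intro open_Collect_less continuous_intros)
  show ?thesis unfolding 1 by (rule open_Int[OF 2 3])
qed

lemma SS2: "SS (w::complex^2) = cmod (w$1) + (cmod (w$2))\<^sup>2" by (simp add: SS_def UNIV2m)
lemma QQ2: "QQ (w::complex^2) = w$1 + (w$2)\<^sup>2" by (simp add: QQ_def UNIV2m)
lemma SS3: "SS (w::complex^3) = cmod (w$1) + (cmod (w$2))\<^sup>2 + (cmod (w$3))\<^sup>2"
  by (simp add: SS_def UNIV3m)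
lemma QQ3: "QQ (w::complex^3) = w$1 + (w$2)\<^sup>2 + (w$3)\<^sup>2" by (simp add: QQ_def UNIV3m)
lemma SS4: "SS (w::complex^4) = cmod (w$1) + (cmod (w$2))\<^sup>2 + (cmod (w$3))\<^sup>2 + (cmod (w$4))\<^sup>2"
  by (simp add: SS_def UNIV4m)
lemma QQ4: "QQ (w::complex^4) = w$1 + (w$2)\<^sup>2 + (w$3)\<^sup>2 + (w$4)\<^sup>2" by (simp add: QQ_def UNIV4m)


lemma norm2_sq: "(norm (v::complex^2))\<^sup>2 = (cmod (v$1))\<^sup>2 + (cmod (v$2))\<^sup>2"
  by (simp add: norm_vec_def L2_set_def sum_2)

lemma mv2: "(A *v (x::complex^2)) $ i = A$i$1 * x$1 + A$i$2 * x$2"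
  by (simp add: matrix_vector_mult_def sum_2)

lemma quad_ident:
  fixes a b c d x1 x2 :: complex
  shows "(cmod x1)\<^sup>2 + (cmod x2)\<^sup>2 - (cmod (a*x1 + b*x2))\<^sup>2 - (cmod (c*x1 + d*x2))\<^sup>2
     = (1 - (cmod a)\<^sup>2 - (cmod c)\<^sup>2) * (cmod x1)\<^sup>2 + (1 - (cmod b)\<^sup>2 - (cmod d)\<^sup>2) * (cmod x2)\<^sup>2
       - 2 * Re ((cnj a * b + cnj c * d) * cnj x1 * x2)"
  unfolding cmod_power2 by (simp add: power2_eq_square algebra_simps)

lemma lagrange:
  fixes a b c d :: complex
  shows "(1 - (cmod a)\<^sup>2 - (cmod c)\<^sup>2) * (1 - (cmod b)\<^sup>2 - (cmod d)\<^sup>2) - (cmod (cnj a * b + cnj c * d))\<^sup>2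
   = 1 - ((cmod a)\<^sup>2 + (cmod b)\<^sup>2 + (cmod c)\<^sup>2 + (cmod d)\<^sup>2) + (cmod (a*d - b*c))\<^sup>2"
  unfolding cmod_power2 by (simp add: power2_eq_square algebra_simps)

definition FF :: "complex^2^2 \<Rightarrow> real" where
 "FF A = (cmod (A$1$1))\<^sup>2 + (cmod (A$1$2))\<^sup>2 + (cmod (A$2$1))\<^sup>2 + (cmod (A$2$2))\<^sup>2"

lemma opnorm_iff:
  fixes A :: "complex^2^2"
  shows "mat_opnorm A < 1 \<longleftrightarrow> FF A < 2 \<and> FF A < 1 + (cmod (A$1$1 * A$2$2 - A$1$2 * A$2$1))\<^sup>2"
proof -
  define a where "a = A$1$1"
  define b where "b = A$1$2"
  define c where "c = A$2$1"
  define d where "d = A$2$2"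
  define p where "p = 1 - (cmod a)\<^sup>2 - (cmod c)\<^sup>2"
  define r where "r = 1 - (cmod b)\<^sup>2 - (cmod d)\<^sup>2"
  define q where "q = cnj a * b + cnj c * d"
  define Phi where "Phi x1 x2 = p * (cmod x1)\<^sup>2 + r * (cmod x2)\<^sup>2 - 2 * Re (q * cnj x1 * x2)" for x1 x2
  have nAx: "(norm (vector [x1, x2] :: complex^2))\<^sup>2 - (norm (A *v vector [x1,x2]))\<^sup>2 = Phi x1 x2" for x1 x2
    using quad_ident[of x1 x2 a b c d]
    by (simp add: norm2_sq mv2 a_def b_def c_def d_def Phi_def p_def r_def q_def)
  have Fdet: "p * r - (cmod q)\<^sup>2 = 1 - FF A + (cmod (a*d - b*c))\<^sup>2"
    using lagrange[of a c b d] by (simp add: p_def r_def q_def FF_def a_def b_def c_def d_def)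
  have pr: "p + r = 2 - FF A"
    by (simp add: p_def r_def FF_def a_def b_def c_def d_def)
  have goal: "?thesis \<longleftrightarrow> (mat_opnorm A < 1 \<longleftrightarrow> p + r > 0 \<and> p * r - (cmod q)\<^sup>2 > 0)"
    using Fdet pr by (auto simp: a_def b_def c_def d_def)
  show ?thesis unfolding goal
  proof
    assume h: "mat_opnorm A < 1"
    define k where "k = mat_opnorm A"
    have k0: "0 \<le> k" unfolding k_def mat_opnorm_def by (rule onorm_pos_le) simp
    have bnd: "norm (A *v x) \<le> k * norm x" for x unfolding k_def mat_opnorm_def by (rule onorm) simp
    have k1: "0 < 1 - k\<^sup>2"
    proof -
      have "k * k \<le> k * 1" using k0 h k_def by (intro mult_left_mono) auto
      then show ?thesis using h k_def by (simp add: power2_eq_square)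
    qed
    have key: "(1 - k\<^sup>2) * ((cmod x1)\<^sup>2 + (cmod x2)\<^sup>2) \<le> Phi x1 x2" for x1 x2
    proof -
      define v where "v = (vector[x1,x2] :: complex^2)"
      have n: "(norm v)\<^sup>2 = (cmod x1)\<^sup>2 + (cmod x2)\<^sup>2" by (simp add: norm2_sq v_def)
      have "(norm (A *v v))\<^sup>2 \<le> (k * norm v)\<^sup>2"
        by (rule power_mono[OF bnd]) simp
      hence "(norm (A *v v))\<^sup>2 \<le> k\<^sup>2 * (norm v)\<^sup>2" by (simp add: power_mult_distrib)
      moreover have "(1 - k\<^sup>2) * (norm v)\<^sup>2 = (norm v)\<^sup>2 - k\<^sup>2 * (norm v)\<^sup>2" by (simp add: algebra_simps)
      ultimately show ?thesis using nAx[of x1 x2, folded v_def] unfolding n[symmetric] by linarith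
    qed
    have p0: "p > 0" using key[of 1 0] k1 by (simp add: Phi_def)
    have r0: "r > 0" using key[of 0 1] k1 by (simp add: Phi_def)
    have "Phi q (of_real p) = p * (p*r - (cmod q)\<^sup>2)"
      unfolding Phi_def cmod_power2 by (simp add: power2_eq_square algebra_simps)
    moreover have "(1 - k\<^sup>2) * ((cmod q)\<^sup>2 + (cmod (of_real p))\<^sup>2) > 0"
      using k1 p0 by (intro mult_pos_pos) (auto intro: add_nonneg_pos)
    ultimately have "p * (p*r - (cmod q)\<^sup>2) > 0" using key[of q "of_real p"] by linarith
    hence "p*r - (cmod q)\<^sup>2 > 0" using p0 by (simp add: zero_less_mult_iff)
    then show "p + r > 0 \<and> p * r - (cmod q)\<^sup>2 > 0" using p0 r0 by simp
  next
    assume h: "p + r > 0 \<and> p * r - (cmod q)\<^sup>2 > 0"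
    define D where "D = p * r - (cmod q)\<^sup>2"
    have D0: "D > 0" and s0: "p + r > 0" using h by (auto simp: D_def)
    have "p * r > 0" using D0 unfolding D_def by (smt (verit) zero_le_power2)
    then have p0: "p > 0" and r0: "r > 0" using s0 by (auto simp: zero_less_mult_iff)
    define e where "e = D / (p + r)"
    have e0: "e > 0" using D0 s0 by (simp add: e_def)
    have eD: "e * (p + r) = D" using s0 by (simp add: e_def)
    have "(p - e) * (p + r) = p\<^sup>2 + (cmod q)\<^sup>2"
      using eD by (simp add: D_def algebra_simps power2_eq_square)
    then have P: "p - e > 0" using s0 p0
      by (metis add_pos_nonneg zero_le_power2 zero_less_mult_pos2 zero_less_power2 less_numeral_extra(3))
    have "(r - e) * (p + r) = r\<^sup>2 + (cmod q)\<^sup>2"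
      using eD by (simp add: D_def algebra_simps power2_eq_square)
    then have R: "r - e > 0" using s0 r0
      by (metis add_pos_nonneg zero_le_power2 zero_less_mult_pos2 zero_less_power2 less_numeral_extra(3))
    have PR: "(p - e) * (r - e) - (cmod q)\<^sup>2 = e\<^sup>2"
      using eD by (simp add: D_def algebra_simps power2_eq_square)
    have ineq: "e * ((cmod x1)\<^sup>2 + (cmod x2)\<^sup>2) \<le> Phi x1 x2" for x1 x2
    proof -
      define u where "u = cmod x1"
      define vv where "vv = cmod x2"
      define m where "m = cmod q"
      have re: "Re (q * cnj x1 * x2) \<le> m * u * vv"
        using complex_Re_le_cmod[of "q * cnj x1 * x2"] by (simp add: norm_mult u_def vv_def m_def)
      have "(p-e) * ((p-e)*u\<^sup>2 + (r-e)* vv\<^sup>2 - 2*m*u * vv) = ((p-e)*u - m * vv)\<^sup>2 + ((p-e)*(r-e) - m\<^sup>2)* vv\<^sup>2"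
        by (simp add: algebra_simps power2_eq_square)
      also have "\<dots> \<ge> 0" using PR by (simp add: m_def)
      finally have "0 \<le> (p-e)*u\<^sup>2 + (r-e)* vv\<^sup>2 - 2*m*u * vv" using P by (simp add: zero_le_mult_iff)
      moreover have "Phi x1 x2 - e * ((cmod x1)\<^sup>2 + (cmod x2)\<^sup>2) = (p-e)*u\<^sup>2 + (r-e)* vv\<^sup>2 - 2 * Re (q * cnj x1 * x2)"
        by (simp add: Phi_def u_def vv_def algebra_simps)
      ultimately show ?thesis using re by linarith
    qed
    have e1: "e < 1" using P unfolding p_def by (smt (verit) zero_le_power2)
    have bnd: "norm (A *v x) \<le> sqrt (1 - e) * norm x" for x
    proof -
      have x: "x = vector [x$1, x$2]" by (simp add: vec_eq_iff forall_2)
      have "(norm (A *v x))\<^sup>2 \<le> (1 - e) * (norm x)\<^sup>2"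
        using nAx[of "x$1" "x$2"] ineq[of "x$1" "x$2"] x norm2_sq[of x] by (simp add: algebra_simps)
      hence "norm (A *v x) \<le> sqrt ((1 - e) * (norm x)\<^sup>2)" by (rule real_le_rsqrt)
      thus ?thesis by (simp add: real_sqrt_mult)
    qed
    have "mat_opnorm A \<le> sqrt (1 - e)" unfolding mat_opnorm_def by (rule onorm_le) (rule bnd)
    also have "sqrt (1 - e) < 1" using e0 e1 by simp
    finally show "mat_opnorm A < 1" .
  qed
qed


lemma para: "(cmod (u+v))\<^sup>2 + (cmod (u-v))\<^sup>2 = 2*((cmod u)\<^sup>2 + (cmod v)\<^sup>2)"
  unfolding cmod_power2 by (simp add: power2_eq_square algebra_simps)

lemma half_sq: "(cmod (u/2))\<^sup>2 = (cmod u)\<^sup>2/4"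
  by (simp add: norm_divide power_divide)
lemma ihalf_sq: "(cmod (-\<i>*u/2))\<^sup>2 = (cmod u)\<^sup>2/4"
  by (simp add: norm_mult norm_divide power_divide)
lemma ihalf_sq2: "(-\<i>*u/2)\<^sup>2 = -(u\<^sup>2/4)"
  by (simp add: power_mult_distrib power_divide)
lemma lc_minus: "lc S (-Q) = lc S Q" by (simp add: lc_def)

lemma two_disc:
  fixes U V :: real
  assumes "0 \<le> U" "0 \<le> V"
  shows "(U < 1 \<and> V < 1) \<longleftrightarrow> ((U+V)/2 < 1 \<and> U + V < 1 + U*V)"
proof
  assume "U < 1 \<and> V < 1"
  then have "(1-U)*(1-V) > 0" by simp
  then show "(U+V)/2 < 1 \<and> U + V < 1 + U*V" using \<open>U < 1 \<and> V < 1\<close> by (simp add: algebra_simps)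
next
  assume h: "(U+V)/2 < 1 \<and> U + V < 1 + U*V"
  then have "(1-U)*(1-V) > 0" by (simp add: algebra_simps)
  then show "U < 1 \<and> V < 1" using h by (auto simp: zero_less_mult_iff)
qed

lemma norm_lt1_sq: "cmod l < 1 \<longleftrightarrow> (cmod l)\<^sup>2 < 1"
  by (simp add: abs_square_less_1)

lemma bidisc_pair:
  "lc (cmod ((l1+l2)\<^sup>2/4 - l1*l2) + (cmod (l1+l2))\<^sup>2/4) (l1*l2) \<longleftrightarrow> cmod l1 < 1 \<and> cmod l2 < 1"
proof -
  have e: "(l1+l2)\<^sup>2/4 - l1*l2 = ((l1-l2)/2)\<^sup>2" by (simp add: power2_eq_square field_simps)
  have S: "cmod ((l1+l2)\<^sup>2/4 - l1*l2) + (cmod (l1+l2))\<^sup>2/4 = ((cmod l1)\<^sup>2 + (cmod l2)\<^sup>2)/2"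
    unfolding e norm_power half_sq using para[of l1 l2] by simp
  show ?thesis unfolding lc_def S norm_lt1_sq[of l1] norm_lt1_sq[of l2]
    using two_disc[of "(cmod l1)\<^sup>2" "(cmod l2)\<^sup>2"]
    by (auto simp: norm_mult power_mult_distrib)
qed

lemma quad_exists: "\<exists>l1 l2. s = l1 + l2 \<and> p = l1 * (l2::complex)"
proof (intro exI conjI)
  show "s = (s/2 + csqrt (s\<^sup>2/4 - p)) + (s/2 - csqrt (s\<^sup>2/4 - p))" by simp
  have "(s/2 + csqrt (s\<^sup>2/4 - p)) * (s/2 - csqrt (s\<^sup>2/4 - p)) = s\<^sup>2/4 - (csqrt (s\<^sup>2/4 - p))\<^sup>2"
    by (simp add: power2_eq_square field_simps)
  then show "p = (s/2 + csqrt (s\<^sup>2/4 - p)) * (s/2 - csqrt (s\<^sup>2/4 - p))" by simp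
qed

lemma G2_iff: "y \<in> symm_bidisc \<longleftrightarrow> lc (cmod ((y$1)\<^sup>2/4 - y$2) + (cmod (y$1))\<^sup>2/4) (y$2)"
proof -
  have mem: "y \<in> symm_bidisc \<longleftrightarrow> (\<exists>l1 l2. y$1 = l1+l2 \<and> y$2 = l1*l2 \<and> cmod l1 < 1 \<and> cmod l2 < 1)"
    by (auto simp: symm_bidisc_def vec2_eq)
  obtain l1 l2 where l: "y$1 = l1 + l2" "y$2 = l1 * l2" using quad_exists by blast
  show ?thesis
  proof
    assume "y \<in> symm_bidisc"
    then obtain m1 m2 where "y$1 = m1+m2" "y$2 = m1*m2" "cmod m1 < 1" "cmod m2 < 1" using mem by blast
    then show "lc (cmod ((y$1)\<^sup>2/4 - y$2) + (cmod (y$1))\<^sup>2/4) (y$2)" using bidisc_pair by simp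
  next
    assume "lc (cmod ((y$1)\<^sup>2/4 - y$2) + (cmod (y$1))\<^sup>2/4) (y$2)"
    then have "cmod l1 < 1 \<and> cmod l2 < 1" using bidisc_pair l by simp
    then show "y \<in> symm_bidisc" using mem l by blast
  qed
qed

lemma tetra_iff:
  "y \<in> tetrablock \<longleftrightarrow> lc (cmod (y$1*y$2 - y$3) + ((cmod (y$1))\<^sup>2 + (cmod (y$2))\<^sup>2)/2) (y$3)"
proof
  assume "y \<in> tetrablock"
  then obtain A :: "complex^2^2" where A: "y = vector [A$1$1, A$2$2, A$1$1 * A$2$2 - (A$1$2)\<^sup>2]"
    "A$1$2 = A$2$1" "mat_opnorm A < 1"
    by (auto simp: tetrablock_def)
  have y: "y$1 = A$1$1" "y$2 = A$2$2" "y$3 = A$1$1 * A$2$2 - A$1$2 * A$2$1"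
    using A(1,2) by (auto simp: power2_eq_square)
  have S: "cmod (y$1*y$2 - y$3) + ((cmod (y$1))\<^sup>2 + (cmod (y$2))\<^sup>2)/2 = FF A / 2"
    unfolding y using A(2) by (simp add: FF_def norm_mult power2_eq_square field_simps)
  show "lc (cmod (y$1*y$2 - y$3) + ((cmod (y$1))\<^sup>2 + (cmod (y$2))\<^sup>2)/2) (y$3)"
    unfolding S using A(3) opnorm_iff[of A] y(3) by (simp add: lc_def)
next
  assume h: "lc (cmod (y$1*y$2 - y$3) + ((cmod (y$1))\<^sup>2 + (cmod (y$2))\<^sup>2)/2) (y$3)"
  define x where "x = csqrt (y$1*y$2 - y$3)"
  define A where "A = (vector [vector [y$1, x], vector [x, y$2]] :: complex^2^2)"
  have Ae: "A$1$1 = y$1" "A$1$2 = x" "A$2$1 = x" "A$2$2 = y$2" by (simp_all add: A_def)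
  have x2: "x\<^sup>2 = y$1*y$2 - y$3" by (simp add: x_def)
  have xn: "(cmod x)\<^sup>2 = cmod (y$1*y$2 - y$3)" by (simp add: x_def)
  have S: "cmod (y$1*y$2 - y$3) + ((cmod (y$1))\<^sup>2 + (cmod (y$2))\<^sup>2)/2 = FF A / 2"
    by (simp add: FF_def Ae xn[symmetric])
  have det: "A$1$1 * A$2$2 - A$1$2 * A$2$1 = y$3"
    using x2 by (simp add: Ae power2_eq_square)
  have "mat_opnorm A < 1" using h unfolding opnorm_iff det lc_def S by simp
  moreover have "y = vector [A$1$1, A$2$2, A$1$1 * A$2$2 - (A$1$2)\<^sup>2]"
    using x2 by (simp add: vec3_eq Ae)
  moreover have "A$1$2 = A$2$1" by (simp add: Ae)
  ultimately show "y \<in> tetrablock" unfolding tetrablock_def by blast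
qed

lemma domF_iff:
  "y \<in> domF \<longleftrightarrow> lc (cmod (y$1*y$2 - y$3 - (y$4)\<^sup>2/4) + (cmod (y$4))\<^sup>2/4
                       + ((cmod (y$1))\<^sup>2 + (cmod (y$2))\<^sup>2)/2) (y$3)"
proof
  assume "y \<in> domF"
  then obtain A :: "complex^2^2" where A: "y = vector [A$1$1, A$2$2, A$1$1 * A$2$2 - A$1$2 * A$2$1, A$1$2 + A$2$1]"
    "mat_opnorm A < 1"
    by (auto simp: domF_def)
  have y: "y$1 = A$1$1" "y$2 = A$2$2" "y$3 = A$1$1 * A$2$2 - A$1$2 * A$2$1" "y$4 = A$1$2 + A$2$1"
    using A(1) by auto
  have e: "y$1*y$2 - y$3 - (y$4)\<^sup>2/4 = - (((A$1$2 - A$2$1)/2)\<^sup>2)"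
    unfolding y by (simp add: power2_eq_square field_simps)
  have S: "cmod (y$1*y$2 - y$3 - (y$4)\<^sup>2/4) + (cmod (y$4))\<^sup>2/4
                       + ((cmod (y$1))\<^sup>2 + (cmod (y$2))\<^sup>2)/2 = FF A / 2"
    unfolding e norm_minus_cancel norm_power half_sq using para[of "A$1$2" "A$2$1"]
    by (simp add: y FF_def) argo
  show "lc (cmod (y$1*y$2 - y$3 - (y$4)\<^sup>2/4) + (cmod (y$4))\<^sup>2/4
                       + ((cmod (y$1))\<^sup>2 + (cmod (y$2))\<^sup>2)/2) (y$3)"
    unfolding S using A(2) opnorm_iff[of A] y(3) by (simp add: lc_def)
next
  assume h: "lc (cmod (y$1*y$2 - y$3 - (y$4)\<^sup>2/4) + (cmod (y$4))\<^sup>2/4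
                       + ((cmod (y$1))\<^sup>2 + (cmod (y$2))\<^sup>2)/2) (y$3)"
  define r where "r = csqrt ((y$4)\<^sup>2/4 - y$1*y$2 + y$3)"
  define A where "A = (vector [vector [y$1, y$4/2 + r], vector [y$4/2 - r, y$2]] :: complex^2^2)"
  have Ae: "A$1$1 = y$1" "A$1$2 = y$4/2 + r" "A$2$1 = y$4/2 - r" "A$2$2 = y$2" by (simp_all add: A_def)
  have r2: "r\<^sup>2 = (y$4)\<^sup>2/4 - y$1*y$2 + y$3" by (simp add: r_def)
  have e: "y$1*y$2 - y$3 - (y$4)\<^sup>2/4 = - r\<^sup>2" using r2 by simp
  have S: "cmod (y$1*y$2 - y$3 - (y$4)\<^sup>2/4) + (cmod (y$4))\<^sup>2/4
                       + ((cmod (y$1))\<^sup>2 + (cmod (y$2))\<^sup>2)/2 = FF A / 2"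
    unfolding e norm_minus_cancel norm_power using para[of "y$4/2" r]
    by (simp add: FF_def Ae half_sq power_divide) argo
  have det: "A$1$1 * A$2$2 - A$1$2 * A$2$1 = y$3"
  proof -
    have "A$1$2 * A$2$1 = (y$4)\<^sup>2/4 - r\<^sup>2" by (simp add: Ae power2_eq_square field_simps)
    then show ?thesis using r2 by (simp add: Ae)
  qed
  have "mat_opnorm A < 1" using h unfolding opnorm_iff det lc_def S by simp
  moreover have "y = vector [A$1$1, A$2$2, A$1$1 * A$2$2 - A$1$2 * A$2$1, A$1$2 + A$2$1]"
    using det by (simp add: vec4_eq Ae)
  ultimately show "y \<in> domF" unfolding domF_def by blast
qed


lemma mi_norm: "cmod (- \<i> * u) = cmod u" by (simp add: norm_mult)

theorem corollary3p9:
  shows "biholomorphism (\<lambda>w::complex^2. vector [2 * \<i> * w$2, - w$1 - (w$2)\<^sup>2] :: complex^2)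
            (LL :: (complex^2) set) symm_bidisc
       \<and> biholomorphism (\<lambda>w::complex^3. vector [w$2 + \<i> * w$3, - w$2 + \<i> * w$3,
                                               - (w$3)\<^sup>2 - (w$2)\<^sup>2 - w$1] :: complex^3)
            (LL :: (complex^3) set) tetrablock
       \<and> biholomorphism (\<lambda>w::complex^4. vector [w$3 + \<i> * w$4, - w$3 + \<i> * w$4,
                                               - (w$2)\<^sup>2 - (w$3)\<^sup>2 - (w$4)\<^sup>2 - w$1, 2 * w$2] :: complex^4)
            (LL :: (complex^4) set) domF"
proof (intro conjI)
  show "biholomorphism (\<lambda>w::complex^2. vector [2 * \<i> * w$2, - w$1 - (w$2)\<^sup>2] :: complex^2)
            (LL :: (complex^2) set) symm_bidisc"
  proof (rule biholo_inverse[where g = "\<lambda>y. vector [(y$1)\<^sup>2/4 - y$2, -\<i>*y$1/2] :: complex^2"])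
    fix x :: "complex^2"
    show "(vector [((vector [2 * \<i> * x$2, - x$1 - (x$2)\<^sup>2] :: complex^2)$1)\<^sup>2/4 - (vector [2 * \<i> * x$2, - x$1 - (x$2)\<^sup>2] :: complex^2)$2,
           -\<i>*(vector [2 * \<i> * x$2, - x$1 - (x$2)\<^sup>2] :: complex^2)$1/2] :: complex^2) = x"
      by (simp add: vec_eq_iff forall_2 power_mult_distrib)
  next
    fix y :: "complex^2"
    show "(vector [2 * \<i> * (vector [(y$1)\<^sup>2/4 - y$2, -\<i>*y$1/2] :: complex^2)$2,
        - (vector [(y$1)\<^sup>2/4 - y$2, -\<i>*y$1/2] :: complex^2)$1 - ((vector [(y$1)\<^sup>2/4 - y$2, -\<i>*y$1/2] :: complex^2)$2)\<^sup>2] :: complex^2) = y"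
      by (simp add: vec_eq_iff forall_2 power_mult_distrib power_divide)
  next
    fix i :: 2
    show "cpoly (\<lambda>w::complex^2. (vector [2 * \<i> * w$2, - w$1 - (w$2)\<^sup>2] :: complex^2) $ i)"
      using exhaust_2[of i] by (elim disjE) (simp_all, (intro cpoly.intros)+)
  next
    fix i :: 2
    show "cpoly (\<lambda>y::complex^2. (vector [(y$1)\<^sup>2/4 - y$2, -\<i>*y$1/2] :: complex^2) $ i)"
      using exhaust_2[of i] by (elim disjE) (simp_all, (intro cpoly.intros)+)
  next
    show "open (LL :: (complex^2) set)" by (rule open_LL)
  next
    fix y :: "complex^2"
    show "y \<in> symm_bidisc \<longleftrightarrow> (vector [(y$1)\<^sup>2/4 - y$2, -\<i>*y$1/2] :: complex^2) \<in> LL"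
    proof -
      have q: "(y$1)\<^sup>2/4 - y$2 + (-\<i>*y$1/2)\<^sup>2 = - y$2"
        by (simp add: power_mult_distrib power_divide)
      show ?thesis
        unfolding LL_iff SS2 QQ2 G2_iff vector_2 q ihalf_sq lc_minus ..
    qed
  qed
next
  show "biholomorphism (\<lambda>w::complex^3. vector [w$2 + \<i> * w$3, - w$2 + \<i> * w$3,
                                               - (w$3)\<^sup>2 - (w$2)\<^sup>2 - w$1] :: complex^3)
            (LL :: (complex^3) set) tetrablock"
  proof (rule biholo_inverse[where g = "\<lambda>y. vector [y$1*y$2 - y$3, (y$1 - y$2)/2, -\<i>*(y$1 + y$2)/2] :: complex^3"])
    fix x :: "complex^3"
    show "(\<lambda>y. vector [y$1*y$2 - y$3, (y$1 - y$2)/2, -\<i>*(y$1 + y$2)/2] :: complex^3)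
       ((\<lambda>w::complex^3. vector [w$2 + \<i> * w$3, - w$2 + \<i> * w$3, - (w$3)\<^sup>2 - (w$2)\<^sup>2 - w$1] :: complex^3) x) = x"
      by (simp add: vec_eq_iff forall_3 power2_eq_square algebra_simps)
  next
    fix y :: "complex^3"
    show "(\<lambda>w::complex^3. vector [w$2 + \<i> * w$3, - w$2 + \<i> * w$3, - (w$3)\<^sup>2 - (w$2)\<^sup>2 - w$1] :: complex^3)
      ((\<lambda>y. vector [y$1*y$2 - y$3, (y$1 - y$2)/2, -\<i>*(y$1 + y$2)/2] :: complex^3) y) = y"
      by (simp add: vec_eq_iff forall_3 power2_eq_square field_simps)
  next
    fix i :: 3
    show "cpoly (\<lambda>w::complex^3. (vector [w$2 + \<i> * w$3, - w$2 + \<i> * w$3, - (w$3)\<^sup>2 - (w$2)\<^sup>2 - w$1] :: complex^3) $ i)"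
      using exhaust_3[of i] by (elim disjE) (simp_all, (intro cpoly.intros)+)
  next
    fix i :: 3
    show "cpoly (\<lambda>y::complex^3. (vector [y$1*y$2 - y$3, (y$1 - y$2)/2, -\<i>*(y$1 + y$2)/2] :: complex^3) $ i)"
      using exhaust_3[of i] by (elim disjE) (simp_all, (intro cpoly.intros)+)
  next
    show "open (LL :: (complex^3) set)" by (rule open_LL)
  next
    fix y :: "complex^3"
    have q: "y$1*y$2 - y$3 + ((y$1 - y$2)/2)\<^sup>2 + (-\<i>*(y$1 + y$2)/2)\<^sup>2 = - y$3"
      by (simp add: power2_eq_square field_simps)
    have s: "(cmod ((y$1 - y$2)/2))\<^sup>2 + (cmod (-\<i>*(y$1 + y$2)/2))\<^sup>2 = ((cmod (y$1))\<^sup>2 + (cmod (y$2))\<^sup>2)/2"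
      unfolding half_sq mi_norm using para[of "y$1" "y$2"] by argo
    show "y \<in> tetrablock \<longleftrightarrow> (vector [y$1*y$2 - y$3, (y$1 - y$2)/2, -\<i>*(y$1 + y$2)/2] :: complex^3) \<in> LL"
      unfolding LL_iff SS3 QQ3 tetra_iff vector_3 q unfolding add.assoc s unfolding lc_minus ..
  qed
next
  show "biholomorphism (\<lambda>w::complex^4. vector [w$3 + \<i> * w$4, - w$3 + \<i> * w$4,
                                               - (w$2)\<^sup>2 - (w$3)\<^sup>2 - (w$4)\<^sup>2 - w$1, 2 * w$2] :: complex^4)
            (LL :: (complex^4) set) domF"
  proof (rule biholo_inverse[where g = "\<lambda>y. vector [y$1*y$2 - y$3 - (y$4)\<^sup>2/4, y$4/2, (y$1 - y$2)/2, -\<i>*(y$1 + y$2)/2] :: complex^4"])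
    fix x :: "complex^4"
    show "(\<lambda>y. vector [y$1*y$2 - y$3 - (y$4)\<^sup>2/4, y$4/2, (y$1 - y$2)/2, -\<i>*(y$1 + y$2)/2] :: complex^4)
       ((\<lambda>w::complex^4. vector [w$3 + \<i> * w$4, - w$3 + \<i> * w$4,
                                               - (w$2)\<^sup>2 - (w$3)\<^sup>2 - (w$4)\<^sup>2 - w$1, 2 * w$2] :: complex^4) x) = x"
      by (simp add: vec_eq_iff forall_4 power2_eq_square algebra_simps)
  next
    fix y :: "complex^4"
    show "(\<lambda>w::complex^4. vector [w$3 + \<i> * w$4, - w$3 + \<i> * w$4,
                                               - (w$2)\<^sup>2 - (w$3)\<^sup>2 - (w$4)\<^sup>2 - w$1, 2 * w$2] :: complex^4)
      ((\<lambda>y. vector [y$1*y$2 - y$3 - (y$4)\<^sup>2/4, y$4/2, (y$1 - y$2)/2, -\<i>*(y$1 + y$2)/2] :: complex^4) y) = y"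
      by (simp add: vec_eq_iff forall_4 power2_eq_square field_simps)
  next
    fix i :: 4
    show "cpoly (\<lambda>w::complex^4. (vector [w$3 + \<i> * w$4, - w$3 + \<i> * w$4,
                                               - (w$2)\<^sup>2 - (w$3)\<^sup>2 - (w$4)\<^sup>2 - w$1, 2 * w$2] :: complex^4) $ i)"
      using exhaust_4[of i] by (elim disjE) (simp_all, (intro cpoly.intros)+)
  next
    fix i :: 4
    show "cpoly (\<lambda>y::complex^4. (vector [y$1*y$2 - y$3 - (y$4)\<^sup>2/4, y$4/2, (y$1 - y$2)/2, -\<i>*(y$1 + y$2)/2] :: complex^4) $ i)"
      using exhaust_4[of i] by (elim disjE) (simp_all, (intro cpoly.intros)+)
  next
    show "open (LL :: (complex^4) set)" by (rule open_LL)
  next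
    fix y :: "complex^4"
    have q: "y$1*y$2 - y$3 - (y$4)\<^sup>2/4 + (y$4/2)\<^sup>2 + ((y$1 - y$2)/2)\<^sup>2 + (-\<i>*(y$1 + y$2)/2)\<^sup>2 = - y$3"
      by (simp add: power2_eq_square field_simps)
    have s: "(cmod ((y$1 - y$2)/2))\<^sup>2 + (cmod (-\<i>*(y$1 + y$2)/2))\<^sup>2 = ((cmod (y$1))\<^sup>2 + (cmod (y$2))\<^sup>2)/2"
      unfolding half_sq mi_norm using para[of "y$1" "y$2"] by argo
    show "y \<in> domF \<longleftrightarrow> (vector [y$1*y$2 - y$3 - (y$4)\<^sup>2/4, y$4/2, (y$1 - y$2)/2, -\<i>*(y$1 + y$2)/2] :: complex^4) \<in> LL"
      unfolding LL_iff SS4 QQ4 domF_iff vector_4 q unfolding add.assoc s unfolding half_sq lc_minus ..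
  qed
qed

end
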